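(* Let $r_{\rm A}>0$. There exists $\theta_0\in\,]0,\pi/2[$ such that for every $\theta_{\rm A}\in\,]\theta_0,\pi/2[$ the function $$T_I^S(\eta)=\int_{-\pi-\theta_{\rm A}}^{\theta_{\rm A}}\frac{r_{\rm A}^{3/2}(1-\eta\sin\theta_{\rm A})^{3/2}}{(1-\eta\sin\theta)^2}\,{\rm d}\theta,\qquad \eta\in\,]-1,1/\sin\theta_{\rm A}[,$$ is not convex.
   Context: Kepler problem normalized as $\ddot q=-q/|q|^3$, center ${\rm O}$ at the origin, polar coordinates $(r,\theta)$. With ${\rm A}=(r_{\rm A}\cos\theta_{\rm A},r_{\rm A}\sin\theta_{\rm A})$ and ${\rm B}=(-r_{\rm A}\cos\theta_{\rm A},r_{\rm A}\sin\theta_{\rm A})$, the simple indirect Keplerian arcs from ${\rm A}$ to ${\rm B}$ are the arcs of the conics $r=r_{\rm A}(1-\eta\sin\theta_{\rm A})/(1-\eta\sin\theta)$ ($\eta$ the signed eccentricity) passing below ${\rm O}$, with $\theta$ going from $\theta_{\rm A}$ down to $-\pi-\theta_{\rm A}$; these exist exactly for $\eta\in\,]-1,1/\sin\theta_{\rm A}[$, and $T_I^S(\eta)$ is their elapsed time (using $C=r^2|\dot\theta|$, $C^2=r_{\rm A}(1-\eta\sin\theta_{\rm A})$). *)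

theory Defs
  imports "HOL-Analysis.Analysis"
begin

definition TIS :: "real \<Rightarrow> real \<Rightarrow> real \<Rightarrow> real" where
  "TIS rA thetaA eta =
     integral {-pi - thetaA..thetaA}
       (\<lambda>\<theta>. rA powr (3/2) * (1 - eta * sin thetaA) powr (3/2) / (1 - eta * sin \<theta>)\<^sup>2)"

end

theory Submission
  imports Defs
begin

lemma one_minus_cos_le: "1 - cos (u::real) \<le> u^2/2"
proof -
  have "cos u = 1 - 2 * (sin (u/2))^2" using cos_double_sin[of "u/2"] by simp
  moreover have "(sin (u/2))^2 \<le> (u/2)^2"
    using abs_sin_x_le_abs_x[of "u/2"] by (metis abs_le_square_iff)
  ultimately show ?thesis by (simp add: power_divide)
qed

lemma sin_cubic: assumes "(0::real) \<le> u" shows "u - u^3/6 \<le> sin u"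
proof -
  let ?h = "\<lambda>x::real. sin x - x + x^3/6"
  have d: "\<And>x. (?h has_real_derivative (cos x - 1 + x^2/2)) (at x)"
    by (auto intro!: derivative_eq_intros simp: field_simps power2_eq_square)
  have "\<And>x::real. 0 \<le> cos x - 1 + x^2/2" using one_minus_cos_le by (smt (verit))
  then have "?h 0 \<le> ?h u"
    by (metis DERIV_nonneg_imp_nondecreasing[OF assms] d)
  then show ?thesis by simp
qed

lemma sin_lin: assumes "(0::real) \<le> u" "u \<le> pi/2" shows "u/pi \<le> sin u"
proof -
  have "u < 2" using assms pi_less_4 by linarith
  then have "u^2 \<le> 2^2" using assms by (intro power_mono) auto
  then have "u^2 \<le> 4" by simp
  then have "u^3 \<le> 4*u" using assms by (simp add: power3_eq_cube power2_eq_square mult_right_mono)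
  then have "u/3 \<le> sin u" using sin_cubic[OF assms(1)] by linarith
  moreover have "u/pi \<le> u/3" using assms pi_gt3 by (intro divide_left_mono) auto
  ultimately show ?thesis by linarith
qed

lemma gap_eq: "sin (t::real) - sin (t - u) = sin t * (1 - cos u) + cos t * sin u"
  by (simp add: sin_diff algebra_simps)

lemma gap_lower:
  assumes c: "0 < cos t" "cos t \<le> sin t" and u: "0 \<le> u" "u < pi"
  shows "cos t * u / pi \<le> sin t - sin (t - u)"
proof (cases "u \<le> pi/2")
  case True
  have "cos t * (u/pi) \<le> cos t * sin u" using sin_lin[OF u(1) True] c by (intro mult_left_mono) auto
  moreover have "0 \<le> sin t * (1 - cos u)" using c by simp
  ultimately show ?thesis unfolding gap_eq by simp
next
  case False
  have "0 \<le> cos (pi - u)" using False u by (intro cos_ge_zero) auto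
  then have "cos u \<le> 0" by simp
  then have "sin t \<le> sin t * (1 - cos u)" using c by (simp add: algebra_simps mult_nonpos_nonneg)
  moreover have "0 \<le> cos t * sin u" using c u by (simp add: sin_ge_zero)
  moreover have "cos t * u / pi \<le> cos t" using c u by (simp add: divide_le_eq)
  ultimately show ?thesis unfolding gap_eq using c by linarith
qed

lemma gap_upper:
  assumes "0 \<le> sin t" "0 \<le> cos t" "0 \<le> (u::real)"
  shows "sin t - sin (t - u) \<le> sin t * u^2/2 + cos t * u"
proof -
  have "sin t * (1 - cos u) \<le> sin t * (u^2/2)" using one_minus_cos_le[of u] assms by (intro mult_left_mono) auto
  moreover have "cos t * sin u \<le> cos t * u" using sin_x_le_x[of u] assms by (intro mult_left_mono) auto
  ultimately show ?thesis unfolding gap_eq by simp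
qed

lemma angle_facts:
  assumes "pi/4 < t" "t < pi/2"
  shows "0 < cos t" "cos t < sin t" "1/2 < sin t" "sin t \<le> 1" "0 < t"
proof -
  have t0: "0 < t" using assms pi_gt_zero by linarith
  show "0 < cos t" using assms t0 by (intro cos_gt_zero_pi) auto
  have "cos t < cos (pi/2 - t)" using assms by (intro cos_monotone_0_pi) auto
  then show cs: "cos t < sin t" by (simp add: cos_sin_eq)
  show "sin t \<le> 1" by simp
  have "sin t ^2 + cos t ^2 = 1" by simp
  moreover have "0 < sin t" using assms t0 by (intro sin_gt_zero) auto
  moreover have "0 < cos t" using assms t0 by (intro cos_gt_zero_pi) auto
  ultimately have "cos t ^2 < sin t ^2" using cs by (intro power_strict_mono) auto
  then have h: "1/2 < sin t ^2" using \<open>sin t ^2 + cos t ^2 = 1\<close> by linarith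
  show "1/2 < sin t"
  proof (rule ccontr)
    assume "\<not> 1/2 < sin t"
    then have "sin t ^2 \<le> (1/2)^2" using \<open>0 < sin t\<close> by (intro power_mono) auto
    then show False using h by (simp add: power2_eq_square)
  qed
  show "0 < t" by fact
qed

lemma gap_whole:
  assumes "pi/4 < t" "t < pi/2" "-pi-t \<le> \<theta>" "\<theta> \<le> t"
  shows "(-pi/2 \<le> \<theta> \<longrightarrow> cos t*(t-\<theta>)/pi \<le> sin t - sin \<theta>) \<and>
         (\<theta> < -pi/2 \<longrightarrow> cos t*(\<theta>+pi+t)/pi \<le> sin t - sin \<theta>)"
proof -
  note af = angle_facts[OF assms(1,2)]
  have 1: "cos t*(t-\<theta>)/pi \<le> sin t - sin \<theta>" if "-pi/2 \<le> \<theta>"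
    using gap_lower[of t "t-\<theta>"] af that assms by auto
  have "sin (t - (\<theta>+pi+t)) = sin \<theta>"
    by (simp add: sin_diff sin_add)
  then have 2: "cos t*(\<theta>+pi+t)/pi \<le> sin t - sin \<theta>" if "\<theta> < -pi/2"
    using gap_lower[of t "\<theta>+pi+t"] af that assms by auto
  show ?thesis using 1 2 by auto
qed

lemma D_form0: "(s::real) \<noteq> 0 \<Longrightarrow> 1 - (1-e)/s * x = e + (1-e)*(s-x)/s"
  by (simp add: field_simps)

lemma D_form:
  assumes "sin (t::real) \<noteq> 0" "\<eta> = (1-e)/ sin t"
  shows "1 - \<eta> * sin \<theta> = e + (1-e)*(sin t - sin \<theta>)/ sin t"
  unfolding assms(2) by (rule D_form0[OF assms(1)])

lemma inv_sq_le: "0 < y \<Longrightarrow> y \<le> D \<Longrightarrow> 0 \<le> K \<Longrightarrow> K / D^2 \<le> K / (y::real)^2"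
  by (intro divide_left_mono power_mono) auto

lemma d1: assumes "0 < a" "e + a*(t-x) \<noteq> 0"
  shows "((\<lambda>x. 1/(a*(e + a*(t-x)))) has_real_derivative 1/(e+a*(t-x))^2) (at x)"
  using assms by (auto intro!: derivative_eq_intros simp: power2_eq_square)
lemma d2: assumes "0 < a" "e + a*(x+p+q) \<noteq> 0"
  shows "((\<lambda>x. - (1/(a*(e + a*(x+p+q))))) has_real_derivative 1/(e+a*(x+p+q))^2) (at x)"
  using assms by (auto intro!: derivative_eq_intros simp: power2_eq_square)

lemma lin_aux: "(A::real) \<le> X \<Longrightarrow> B = A/2 \<Longrightarrow> X/2 \<le> Y \<Longrightarrow> e + B \<le> e + Y"
  by linarith

lemma upper_int:
  assumes t: "pi/4 < t" "t < pi/2" and e: "0 < e" "e \<le> 1/2" and K: "0 \<le> K"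
    and eta: "\<eta> = (1-e)/ sin t"
  shows "integral {-pi-t..t} (\<lambda>\<theta>. K / (1 - \<eta> * sin \<theta>)^2) \<le> 4*pi*K/(cos t * e)"
proof -
  note af = angle_facts[OF t]
  define a where "a = cos t/(2*pi)"
  have a0: "0 < a" using af by (simp add: a_def)
  define g where "g \<theta> = K*(1/(e + a*(t-\<theta>))^2 + 1/(e + a*(\<theta>+pi+t))^2)" for \<theta>
  define F where "F \<theta> = K*(1/(a*(e + a*(t-\<theta>))) - 1/(a*(e + a*(\<theta>+pi+t))))" for \<theta>
  have Dlow: "(-pi/2 \<le> \<theta> \<longrightarrow> e + a*(t-\<theta>) \<le> 1 - \<eta>* sin \<theta>) \<and>
        (\<theta> < -pi/2 \<longrightarrow> e + a*(\<theta>+pi+t) \<le> 1 - \<eta> * sin \<theta>)"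
    if th: "\<theta> \<in> {-pi-t..t}" for \<theta>
  proof -
    have gw: "(-pi/2 \<le> \<theta> \<longrightarrow> cos t*(t-\<theta>)/pi \<le> sin t - sin \<theta>) \<and>
         (\<theta> < -pi/2 \<longrightarrow> cos t*(\<theta>+pi+t)/pi \<le> sin t - sin \<theta>)"
      using gap_whole[OF t, of \<theta>] th by auto
    have X0: "0 \<le> sin t - sin \<theta>"
    proof (cases "-pi/2 \<le> \<theta>")
      case True
      have "0 \<le> cos t*(t-\<theta>)/pi" using af th by auto
      then show ?thesis using gw True by linarith
    next
      case False
      have "0 \<le> cos t*(\<theta>+pi+t)/pi" using af th by auto
      then show ?thesis using gw False by linarith
    qed
    have h1: "(sin t - sin \<theta>)/2 \<le> (1-e)*(sin t - sin \<theta>)/ sin t"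
    proof -
      have s1: "sin t \<le> 1" by simp
      have "1/2 \<le> (1-e)/ sin t" using af e by (simp add: le_divide_eq) (use s1 in linarith)
      then have "1/2 * (sin t - sin \<theta>) \<le> (1-e)/ sin t * (sin t - sin \<theta>)"
        using X0 by (intro mult_right_mono) auto
      then show ?thesis by simp
    qed
    have Df: "1 - \<eta> * sin \<theta> = e + (1-e)*(sin t - sin \<theta>)/ sin t"
      using D_form[of t \<eta> e \<theta>] af eta by auto
    have aw: "a*w = (cos t * w / pi)/2" for w unfolding a_def by simp
    show ?thesis
    proof (intro conjI impI)
      assume "-pi/2 \<le> \<theta>"
      then have "cos t*(t-\<theta>)/pi \<le> sin t - sin \<theta>" using gw by blast
      then show "e + a*(t-\<theta>) \<le> 1 - \<eta>* sin \<theta>" unfolding Df by (rule lin_aux[OF _ aw[of "t-\<theta>"] h1])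
    next
      assume "\<theta> < -pi/2"
      then have "cos t*(\<theta>+pi+t)/pi \<le> sin t - sin \<theta>" using gw by blast
      then show "e + a*(\<theta>+pi+t) \<le> 1 - \<eta>* sin \<theta>" unfolding Df by (rule lin_aux[OF _ aw[of "\<theta>+pi+t"] h1])
    qed
  qed
  have fg: "K / (1 - \<eta> * sin \<theta>)^2 \<le> g \<theta>" if th: "\<theta> \<in> {-pi-t..t}" for \<theta>
  proof -
    have u0: "0 \<le> t - \<theta>" "0 \<le> \<theta>+pi+t" using th by auto
    have p1: "0 < e + a*(t-\<theta>)" "0 < e + a*(\<theta>+pi+t)" using u0 a0 e by (auto intro: add_pos_nonneg)
    have nn: "0 \<le> K/(e + a*(t-\<theta>))^2" "0 \<le> K/(e + a*(\<theta>+pi+t))^2" using K by auto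
    have g': "g \<theta> = K/(e + a*(t-\<theta>))^2 + K/(e + a*(\<theta>+pi+t))^2"
      unfolding g_def by (simp add: distrib_left)
    show ?thesis
    proof (cases "-pi/2 \<le> \<theta>")
      case True
      then have "K / (1 - \<eta> * sin \<theta>)^2 \<le> K/(e + a*(t-\<theta>))^2"
        using Dlow[OF th] p1 K by (intro inv_sq_le) auto
      then show ?thesis using g' nn by linarith
    next
      case False
      then have "K / (1 - \<eta> * sin \<theta>)^2 \<le> K/(e + a*(\<theta>+pi+t))^2"
        using Dlow[OF th] p1 K by (intro inv_sq_le) auto
      then show ?thesis using g' nn by linarith
    qed
  qed
  have Dpos: "0 < 1 - \<eta> * sin \<theta>" if th: "\<theta> \<in> {-pi-t..t}" for \<theta>
  proof -
    have u0: "0 \<le> t - \<theta>" "0 \<le> \<theta>+pi+t" using th by auto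
    have p1: "0 < e + a*(t-\<theta>)" "0 < e + a*(\<theta>+pi+t)" using u0 a0 e by (auto intro: add_pos_nonneg)
    show ?thesis using Dlow[OF th] p1 by (cases "-pi/2 \<le> \<theta>") auto
  qed
  have deriv: "(F has_vector_derivative g \<theta>) (at \<theta> within {-pi-t..t})" if th: "\<theta> \<in> {-pi-t..t}" for \<theta>
  proof -
    have u0: "0 \<le> t - \<theta>" "0 \<le> \<theta>+pi+t" using th by auto
    have p1: "0 < e + a*(t-\<theta>)" "0 < e + a*(\<theta>+pi+t)" using u0 a0 e by (auto intro: add_pos_nonneg)
    have "((\<lambda>x. K * (1/(a*(e+a*(t-x))) + - (1/(a*(e+a*(x+pi+t)))))) has_real_derivative
        K*(1/(e+a*(t-\<theta>))^2 + 1/(e+a*(\<theta>+pi+t))^2)) (at \<theta>)"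
      by (intro DERIV_cmult DERIV_add d1 d2) (use p1 a0 in auto)
    then have "(F has_real_derivative g \<theta>) (at \<theta>)"
      unfolding F_def[abs_def] g_def by simp
    then show ?thesis
      using has_real_derivative_iff_has_vector_derivative has_vector_derivative_at_within by blast
  qed
  have gi: "(g has_integral (F t - F (-pi-t))) {-pi-t..t}"
  proof (rule fundamental_theorem_of_calculus)
    show "-pi-t \<le> t" using af pi_gt_zero by linarith
  qed (use deriv in auto)
  have cont: "continuous_on {-pi-t..t} (\<lambda>\<theta>. K / (1 - \<eta> * sin \<theta>)^2)"
    using Dpos by (intro continuous_intros) (auto simp del: atLeastAtMost_iff dest!: Dpos)
  have fi: "((\<lambda>\<theta>. K / (1 - \<eta> * sin \<theta>)^2) has_integral integral {-pi-t..t} (\<lambda>\<theta>. K / (1 - \<eta> * sin \<theta>)^2)) {-pi-t..t}"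
    using integrable_continuous_interval[OF cont] by (rule integrable_integral)
  have le1: "integral {-pi-t..t} (\<lambda>\<theta>. K / (1 - \<eta> * sin \<theta>)^2) \<le> F t - F (-pi-t)"
    by (rule has_integral_le[OF fi gi]) (use fg in auto)
  have L0: "0 < e + a*(pi + 2*t)" using a0 e af by (auto intro: add_pos_nonneg)
  have "F t - F (-pi-t) = 2*K*(1/(a*e) - 1/(a*(e + a*(pi+2*t))))"
    unfolding F_def by (simp add: algebra_simps)
  also have "\<dots> \<le> 2*K*(1/(a*e))"
    using L0 a0 e K by (intro mult_left_mono) auto
  also have "\<dots> = 4*pi*K/(cos t * e)" unfolding a_def using af by (simp add: field_simps)
  finally show ?thesis using le1 by linarith
qed

lemma X_nonneg:
  assumes t: "pi/4 < t" "t < pi/2" and th: "-pi-t \<le> \<theta>" "\<theta> \<le> t"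
  shows "0 \<le> sin t - sin \<theta>"
proof -
  note af = angle_facts[OF t]
  have gw: "(-pi/2 \<le> \<theta> \<longrightarrow> cos t*(t-\<theta>)/pi \<le> sin t - sin \<theta>) \<and>
       (\<theta> < -pi/2 \<longrightarrow> cos t*(\<theta>+pi+t)/pi \<le> sin t - sin \<theta>)"
    using gap_whole[OF t th] by auto
  show ?thesis
  proof (cases "-pi/2 \<le> \<theta>")
    case True
    have "0 \<le> cos t*(t-\<theta>)/pi" using af th by auto
    then show ?thesis using gw True by linarith
  next
    case False
    have "0 \<le> cos t*(\<theta>+pi+t)/pi" using af th by auto
    then show ?thesis using gw False by linarith
  qed
qed

lemma lower_int:
  assumes t: "pi/4 < t" "t < pi/2" and e: "0 < e" "e \<le> (cos t)^2" "e \<le> 1/2" and K: "0 \<le> K"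
    and eta: "\<eta> = (1-e)/ sin t"
  shows "(e * sin t / cos t) * (K/(5*e/2)^2) \<le> integral {-pi-t..t} (\<lambda>\<theta>. K / (1 - \<eta> * sin \<theta>)^2)"
proof -
  note af = angle_facts[OF t]
  define s where "s = sin t"
  define c where "c = cos t"
  have s0: "0 < s" "s \<le> 1" using af by (auto simp: s_def)
  have c0: "0 < c" "c < s" using af by (auto simp: s_def c_def)
  define \<delta> where "\<delta> = e * s / c"
  have d0: "0 < \<delta>" using e s0 c0 by (simp add: \<delta>_def)
  have "\<delta> \<le> c^2 * s / c" unfolding \<delta>_def using e s0 c0 c_def
    by (intro divide_right_mono mult_right_mono) auto
  also have "\<dots> = c * s" using c0 by (simp add: power2_eq_square)
  also have "\<dots> \<le> 1 * 1" using c0 s0 by (intro mult_mono) auto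
  finally have d1: "\<delta> \<le> 1" by simp
  have Df: "1 - \<eta> * sin \<theta> = e + (1-e)*(s - sin \<theta>)/s" for \<theta>
    using D_form[of t \<eta> e \<theta>] af eta s_def by auto
  have Dge: "e \<le> 1 - \<eta> * sin \<theta>" if "\<theta> \<in> {-pi-t..t}" for \<theta>
  proof -
    have "0 \<le> s - sin \<theta>" using X_nonneg[OF t, of \<theta>] that s_def by auto
    then have "0 \<le> (1-e)*(s - sin \<theta>)/s" using e s0 by auto
    then show ?thesis using Df by simp
  qed
  have cont: "continuous_on {-pi-t..t} (\<lambda>\<theta>. K / (1 - \<eta> * sin \<theta>)^2)"
  proof -
    have Dpos: "0 < 1 - \<eta> * sin \<theta>" if "\<theta> \<in> {-pi-t..t}" for \<theta> using Dge[OF that] e by linarith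
    show ?thesis by (intro continuous_intros) (auto simp del: atLeastAtMost_iff dest!: Dpos)
  qed
  have int: "(\<lambda>\<theta>. K / (1 - \<eta> * sin \<theta>)^2) integrable_on {-pi-t..t}"
    by (rule integrable_continuous_interval[OF cont])
  have tpi: "-pi-t \<le> t - \<delta>" using d1 af pi_gt3 by linarith
  have tt: "t - \<delta> \<le> t" using d0 by simp
  have split: "integral {-pi-t..t-\<delta>} (\<lambda>\<theta>. K / (1 - \<eta> * sin \<theta>)^2) + integral {t-\<delta>..t} (\<lambda>\<theta>. K / (1 - \<eta> * sin \<theta>)^2)
      = integral {-pi-t..t} (\<lambda>\<theta>. K / (1 - \<eta> * sin \<theta>)^2)"
    by (rule Henstock_Kurzweil_Integration.integral_combine[OF tpi tt int])
  have i1: "0 \<le> integral {-pi-t..t-\<delta>} (\<lambda>\<theta>. K / (1 - \<eta> * sin \<theta>)^2)"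
    by (rule integral_nonneg) (use integrable_on_subinterval[OF int] tpi tt K in auto)
  have pw: "K/(5*e/2)^2 \<le> K / (1 - \<eta> * sin \<theta>)^2" if th: "\<theta> \<in> {t-\<delta>..t}" for \<theta>
  proof -
    define u where "u = t - \<theta>"
    have u0: "0 \<le> u" "u \<le> \<delta>" using th by (auto simp: u_def)
    have thi: "\<theta> \<in> {-pi-t..t}" using th tpi by auto
    have X0: "0 \<le> s - sin \<theta>" using X_nonneg[OF t, of \<theta>] thi s_def by auto
    have sth: "sin (t - u) = sin \<theta>" by (simp add: u_def)
    have X1: "s - sin \<theta> \<le> s * u^2/2 + c * u"
      using gap_upper[of t u] sth s0 c0 u0 by (simp add: s_def c_def)
    have "(1-e)*(s - sin \<theta>)/s \<le> (s - sin \<theta>)/s"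
      using e X0 s0 by (intro divide_right_mono mult_left_le_one_le) auto
    also have "\<dots> \<le> (s * u^2/2 + c * u)/s" using X1 s0 by (intro divide_right_mono) auto
    also have "\<dots> = u^2/2 + (c/s) * u" using s0 by (simp add: field_simps)
    also have "\<dots> \<le> \<delta>^2/2 + (c/s)*\<delta>" using u0 c0 s0
      by (intro add_mono mult_left_mono divide_right_mono power_mono) auto
    also have "(c/s)*\<delta> = e" using c0 s0 by (simp add: \<delta>_def)
    also have "\<delta>^2/2 \<le> e/2"
    proof -
      have "\<delta>^2 = e * (e * s^2 / c^2)" unfolding \<delta>_def by (simp add: power2_eq_square field_simps)
      also have "e * s^2 / c^2 \<le> 1"
      proof -
        have "s^2 \<le> 1" using s0 by (simp add: power_le_one)
        then have "e * s^2 \<le> c^2 * 1" using e c_def by (intro mult_mono) auto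
        then show ?thesis using c0 by (simp add: divide_le_eq)
      qed
      then have "e * (e * s^2 / c^2) \<le> e * 1" using e by (intro mult_left_mono) auto
      finally show ?thesis by simp
    qed
    finally have "1 - \<eta> * sin \<theta> \<le> 5*e/2" using Df[of \<theta>] by linarith
    then show ?thesis using Dge[OF thi] e K by (intro inv_sq_le) auto
  qed
  have "integral {t-\<delta>..t} (\<lambda>_. K/(5*e/2)^2) \<le> integral {t-\<delta>..t} (\<lambda>\<theta>. K / (1 - \<eta> * sin \<theta>)^2)"
    by (rule integral_le) (use integrable_on_subinterval[OF int] tpi tt pw in auto)
  moreover have "integral {t-\<delta>..t} (\<lambda>_. K/(5*e/2)^2) = \<delta> * (K/(5*e/2)^2)"
    using tt by simp
  ultimately show ?thesis using split i1 unfolding \<delta>_def s_def c_def by linarith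
qed

lemma sq_powr: "0 < (x::real) \<Longrightarrow> (x^2) powr (3/2) = x^3"
proof -
  assume x: "0 < x"
  have "(x^2) powr (3/2) = (x powr 2) powr (3/2)" using x by (simp add: powr_realpow)
  also have "\<dots> = x powr 3" by (simp add: powr_powr)
  also have "\<dots> = x^3" using x by (simp add: powr_realpow)
  finally show ?thesis .
qed

lemma TIS_eq:
  assumes "sin t \<noteq> 0" "0 < x" "\<eta> = (1 - x^2)/ sin t"
  shows "TIS rA t \<eta> = integral {-pi-t..t} (\<lambda>\<theta>. (rA powr (3/2) * x^3) / (1 - \<eta> * sin \<theta>)^2)"
proof -
  have "1 - \<eta> * sin t = x^2" using assms by simp
  then show ?thesis unfolding TIS_def using sq_powr[OF assms(2)] by simp
qed

theorem proposition8:
  fixes rA :: real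
  assumes "rA > 0"
  shows "\<exists>\<theta>0. 0 < \<theta>0 \<and> \<theta>0 < pi/2 \<and>
           (\<forall>thetaA. \<theta>0 < thetaA \<and> thetaA < pi/2 \<longrightarrow>
              \<not> convex_on {-1<..<1 / sin thetaA} (TIS rA thetaA))"
proof (intro exI[of _ "pi/4"] conjI allI impI notI)
  show "0 < pi/4" by simp
  show "pi/4 < pi/2" by simp
  fix t assume tt: "pi/4 < t \<and> t < pi/2"
  then have t: "pi/4 < t" "t < pi/2" by auto
  note af = angle_facts[OF t]
  define s where "s = sin t"
  define c where "c = cos t"
  have s0: "1/2 < s" "s \<le> 1" using af by (auto simp: s_def)
  have c0: "0 < c" "c \<le> 1" using af by (auto simp: c_def)
  define R where "R = rA powr (3/2)"
  have R0: "0 < R" using assms by (simp add: R_def)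
  define x1 where "x1 = c/1000"
  define x2 where "x2 = c/1000000"
  define e1 where "e1 = x1^2"
  define e2 where "e2 = x2^2"
  define \<eta>1 where "\<eta>1 = (1-e1)/s"
  define \<eta>2 where "\<eta>2 = (1-e2)/s"
  have x0: "0 < x1" "0 < x2" using c0 by (auto simp: x1_def x2_def)
  have e0: "0 < e1" "0 < e2" using x0 by (auto simp: e1_def e2_def)
  have e1c: "e1 = c^2/1000000" by (simp add: e1_def x1_def power_divide)
  have e2c: "e2 = c^2/1000000000000" by (simp add: e2_def x2_def power_divide)
  have c2: "c^2 \<le> 1" using c0 by (simp add: power_le_one)
  have e1s: "e1 \<le> 1/1000000" using e1c c2 by simp
  have "0 < c^2" using c0 by simp
  then have e21: "e2 < e1" using e1c e2c by linarith
  let ?f = "TIS rA t"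
  assume conv: "convex_on {-1<..<1 / sin t} ?f"
  have f0: "?f 0 = R * (pi + 2*t)"
  proof -
    have "?f 0 = integral {-pi-t..t} (\<lambda>\<theta>. R)" unfolding TIS_def R_def by simp
    also have "\<dots> = R * (pi + 2*t)"
    proof -
      have "-pi-t \<le> t" using af pi_gt_zero by linarith
      then show ?thesis by (simp add: algebra_simps)
    qed
    finally show ?thesis .
  qed
  have f0le: "?f 0 \<le> 2*pi*R" using f0 t R0 by (simp add: algebra_simps)
  have K0: "0 \<le> R * x1^3" "0 \<le> R * x2^3" using R0 x0 by auto
  have f1: "?f \<eta>1 = integral {-pi-t..t} (\<lambda>\<theta>. (R * x1^3) / (1 - \<eta>1 * sin \<theta>)^2)"
    using TIS_eq[of t x1 \<eta>1 rA] af x0 by (simp add: \<eta>1_def e1_def s_def R_def)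
  have f2: "?f \<eta>2 = integral {-pi-t..t} (\<lambda>\<theta>. (R * x2^3) / (1 - \<eta>2 * sin \<theta>)^2)"
    using TIS_eq[of t x2 \<eta>2 rA] af x0 by (simp add: \<eta>2_def e2_def s_def R_def)
  have low: "(e1 * s / c) * ((R * x1^3)/(5*e1/2)^2) \<le> ?f \<eta>1"
    unfolding f1 s_def c_def
  proof (rule lower_int[OF t])
    show "0 < e1" by (rule e0(1))
    show "e1 \<le> (cos t)^2" using e1c \<open>0 < c^2\<close> unfolding c_def by linarith
    show "e1 \<le> 1/2" using e1s by linarith
    show "0 \<le> R * x1^3" by (rule K0(1))
    show "\<eta>1 = (1-e1)/ sin t" by (simp add: \<eta>1_def s_def)
  qed
  have eqA: "(e1 * s / c) * ((R * x1^3)/(5*e1/2)^2) = 4 * s * R / 25000"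
    using c0 x0 unfolding e1_def x1_def by (simp add: field_simps power2_eq_square power3_eq_cube)
  have low': "4 * s * R / 25000 \<le> ?f \<eta>1" using low unfolding eqA .
  have up: "?f \<eta>2 \<le> 4*pi*(R * x2^3)/(cos t * e2)"
    unfolding f2
    by (rule upper_int[OF t]) (use e0 e1s e21 K0 in \<open>auto simp: \<eta>2_def s_def\<close>)
  have eqB: "4*pi*(R * x2^3)/(cos t * e2) = 4*pi*R/1000000"
    using c0 x0 unfolding e2_def x2_def c_def[symmetric] by (simp add: field_simps power2_eq_square power3_eq_cube)
  have up': "?f \<eta>2 \<le> 4*pi*R/1000000" using up unfolding eqB .
  define l where "l = (1-e1)/(1-e2)"
  have l01: "0 \<le> l" "l \<le> 1" using e21 e1s e0 by (auto simp: l_def divide_le_eq)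
  have mid: "(1 - l) *\<^sub>R 0 + l *\<^sub>R \<eta>2 = \<eta>1"
    using e21 e1s e0 by (simp add: l_def \<eta>1_def \<eta>2_def)
  have in0: "(0::real) \<in> {-1<..<1 / sin t}" using af by auto
  have in2: "\<eta>2 \<in> {-1<..<1 / sin t}"
  proof -
    have "0 < \<eta>2" using e21 e1s e0 s0 by (simp add: \<eta>2_def)
    moreover have "\<eta>2 < 1/s" using e0 s0 by (simp add: \<eta>2_def divide_strict_right_mono)
    ultimately show ?thesis by (simp add: s_def)
  qed
  have cv: "?f \<eta>1 \<le> (1-l) * ?f 0 + l * ?f \<eta>2"
    using convex_onD[OF conv l01 in0 in2] mid by simp
  have oml: "1 - l \<le> 2 / 1000000"
  proof -
    have "1 - l = (e1 - e2)/(1-e2)" using e21 e1s by (simp add: l_def field_simps)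
    also have "\<dots> \<le> e1 / (1/2)" using e0 e21 e1s by (intro frac_le) auto
    finally show ?thesis using e1s by simp
  qed
  have fnn: "0 \<le> ?f 0" using f0 R0 t pi_gt_zero by simp
  have "(1-l) * ?f 0 \<le> (2/1000000) * (2*pi*R)"
    using oml l01 fnn f0le by (intro mult_mono) auto
  moreover have "l * ?f \<eta>2 \<le> 1 * (4*pi*R/1000000)"
  proof -
    have "l * ?f \<eta>2 \<le> l * (4*pi*R/1000000)" using up' l01 by (intro mult_left_mono) auto
    also have "\<dots> \<le> 1 * (4*pi*R/1000000)" using l01 R0 by (intro mult_right_mono) auto
    finally show ?thesis .
  qed
  moreover have "(1/2) * R \<le> s * R" using s0 R0 by (intro mult_right_mono) auto
  moreover have "pi * R \<le> 4 * R" using R0 pi_less_4 by (intro mult_right_mono) auto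
  ultimately show False using low' cv R0 by linarith
qed

end
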